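(* Let $q\neq 2$ be even, let $G=\mathrm{SU}_3(q)$ or $\mathrm{PSU}_3(q)$, and let $\mathcal{C}$ be the conjugacy class of involutions in $G$. Then $\mathcal{K}(G,\mathcal{C})$ equals the commuting graph on $\mathcal{C}$, and $K_{\mathcal{C}}$ is reducible and non-degenerate.
   Context: For a finite group $G$ and a subset $\mathcal{C}\subseteq G\setminus\{1\}$ closed under conjugation, the Killing form $K_{\mathcal{C}}$ is the bilinear form on the complex vector space with basis $\mathcal{C}$ given on basis elements by $K_{\mathcal{C}}(a,b)=|C_G(ab)\cap\mathcal{C}|$; it is non-degenerate if the matrix $(K_{\mathcal{C}}(a,b))_{a,b\in\mathcal{C}}$ is invertible. $\mathcal{K}(G,\mathcal{C})$ is the graph with vertex set $\mathcal{C}$ in which distinct $a,b$ are adjacent iff $C_G(ab)\cap\mathcal{C}\neq\emptyset$. $K_{\mathcal{C}}$ is irreducible if $\mathcal{K}(G,\mathcal{C})$ is connected and reducible otherwise. The commuting graph on $\mathcal{C}$ has vertex set $\mathcal{C}$, with distinct $a,b$ adjacent iff $ab=ba$. *)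

theory Defs
  imports "HOL-Analysis.Analysis" "HOL-Algebra.Coset" "HOL-Combinatorics.Permutations"
begin

section \<open>Generic notions for a (finite) group G and a subset C\<close>

definition grp_centralizer :: "('g, 'b) monoid_scheme \<Rightarrow> 'g \<Rightarrow> 'g set" where
  "grp_centralizer G x = {g \<in> carrier G. g \<otimes>\<^bsub>G\<^esub> x = x \<otimes>\<^bsub>G\<^esub> g}"

definition grp_center :: "('g, 'b) monoid_scheme \<Rightarrow> 'g set" where
  "grp_center G = {z \<in> carrier G. \<forall>g \<in> carrier G. z \<otimes>\<^bsub>G\<^esub> g = g \<otimes>\<^bsub>G\<^esub> z}"

text \<open>The set of involutions of G (elements of order exactly 2).\<close>
definition involutions :: "('g, 'b) monoid_scheme \<Rightarrow> 'g set" where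
  "involutions G = {g \<in> carrier G. g \<noteq> \<one>\<^bsub>G\<^esub> \<and> g \<otimes>\<^bsub>G\<^esub> g = \<one>\<^bsub>G\<^esub>}"

text \<open>K_C(a,b) = |C_G(ab) \<inter> C| on basis elements.\<close>
definition killing :: "('g, 'b) monoid_scheme \<Rightarrow> 'g set \<Rightarrow> 'g \<Rightarrow> 'g \<Rightarrow> nat" where
  "killing G C a b = card (grp_centralizer G (a \<otimes>\<^bsub>G\<^esub> b) \<inter> C)"

text \<open>Determinant of a square complex matrix indexed by the finite set C (Leibniz formula).\<close>
definition det_on :: "'a set \<Rightarrow> ('a \<Rightarrow> 'a \<Rightarrow> complex) \<Rightarrow> complex" where
  "det_on C M = (\<Sum>p \<in> {p. p permutes C}. of_int (sign p) * (\<Prod>a\<in>C. M a (p a)))"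

text \<open>Non-degenerate: the Gram matrix (K_C(a,b))_{a,b in C} is invertible over the complex numbers.\<close>
definition killing_nondegenerate :: "('g, 'b) monoid_scheme \<Rightarrow> 'g set \<Rightarrow> bool" where
  "killing_nondegenerate G C \<longleftrightarrow> det_on C (\<lambda>a b. of_nat (killing G C a b)) \<noteq> 0"

text \<open>Adjacency in the graph K(G,C).\<close>
definition killing_adj :: "('g, 'b) monoid_scheme \<Rightarrow> 'g set \<Rightarrow> 'g \<Rightarrow> 'g \<Rightarrow> bool" where
  "killing_adj G C a b \<longleftrightarrow> a \<in> C \<and> b \<in> C \<and> a \<noteq> b \<and>
      grp_centralizer G (a \<otimes>\<^bsub>G\<^esub> b) \<inter> C \<noteq> {}"

text \<open>Adjacency in the commuting graph on C.\<close>
definition commuting_adj :: "('g, 'b) monoid_scheme \<Rightarrow> 'g set \<Rightarrow> 'g \<Rightarrow> 'g \<Rightarrow> bool" where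
  "commuting_adj G C a b \<longleftrightarrow> a \<in> C \<and> b \<in> C \<and> a \<noteq> b \<and> a \<otimes>\<^bsub>G\<^esub> b = b \<otimes>\<^bsub>G\<^esub> a"

text \<open>A graph on vertex set V with adjacency E is connected if any two vertices are joined by a path.\<close>
definition graph_connected :: "'a set \<Rightarrow> ('a \<Rightarrow> 'a \<Rightarrow> bool) \<Rightarrow> bool" where
  "graph_connected V E \<longleftrightarrow> (\<forall>a\<in>V. \<forall>b\<in>V. (a, b) \<in> {(x, y). x \<in> V \<and> y \<in> V \<and> E x y}\<^sup>*)"

definition killing_irreducible :: "('g, 'b) monoid_scheme \<Rightarrow> 'g set \<Rightarrow> bool" where
  "killing_irreducible G C \<longleftrightarrow> graph_connected C (killing_adj G C)"

definition killing_reducible :: "('g, 'b) monoid_scheme \<Rightarrow> 'g set \<Rightarrow> bool" where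
  "killing_reducible G C \<longleftrightarrow> \<not> killing_irreducible G C"

section \<open>SU_3(q) and PSU_3(q)\<close>

text \<open>'k is a finite field of order q^2; the field automorphism of order 2 is x \<mapsto> x^q.
  A^* is the conjugate transpose.  SU_3(q) is realised w.r.t. the standard Hermitian form
  (identity Gram matrix); all non-degenerate Hermitian forms over GF(q^2) are equivalent.\<close>
definition conj_transpose :: "nat \<Rightarrow> 'k::field^3^3 \<Rightarrow> 'k^3^3" where
  "conj_transpose q A = (\<chi> i j. (A $ j $ i) ^ q)"

definition SU3 :: "nat \<Rightarrow> ('k::{field,finite}^3^3) monoid" where
  "SU3 q = \<lparr> carrier = {A. A ** conj_transpose q A = mat 1 \<and> det A = 1},
            mult = (**), one = mat 1 \<rparr>"

definition PSU3 :: "nat \<Rightarrow> ('k::{field,finite}^3^3) set monoid" where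
  "PSU3 q = SU3 q Mod grp_center (SU3 q)"

end

theory Submission
  imports Defs "HOL-Algebra.Sylow" "HOL-Computational_Algebra.Primes"
begin

(* ---- part T2 ---- *)
lemma fin_field_pow_card: fixes x :: "'a::{field,finite}"
  shows "x ^ CARD('a) = x"
proof (cases "x = 0")
  case False
  have "x * (\<Prod>y\<in>UNIV-{0}. x * y) = x * x ^ (card (UNIV :: 'a set) - 1) * \<Prod>(UNIV-{0})"
    by (simp add: prod.distrib mult_ac)
  also have "x * x ^ (card (UNIV :: 'a set) - 1) = x ^ Suc (card (UNIV :: 'a set) - 1)"
    by (subst power_Suc) auto
  also have "Suc (card (UNIV :: 'a set) - 1) = card (UNIV :: 'a set)"
    using finite_UNIV_card_ge_0[where ?'a = 'a] by simp
  also have "(\<Prod>y\<in>UNIV-{0}. x * y) = (\<Prod>y\<in>UNIV-{0}. y)"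
    by (rule prod.reindex_bij_witness[of _ "\<lambda>y. y / x" "\<lambda>y. x * y"]) (use False in auto)
  finally show ?thesis
    by simp
qed (use finite_UNIV_card_ge_0[where ?'a = 'a] in auto)

lemma char2_from_even_card:
  assumes "even CARD('a::{field,finite})"
  shows "(1::'a) + 1 = 0"
proof -
  have "(-1::'a) ^ CARD('a) = -1" by (rule fin_field_pow_card)
  moreover have "(-1::'a) ^ CARD('a) = 1" using assms by simp
  ultimately have "(1::'a) = -1" by simp
  then show ?thesis by (metis add.right_inverse)
qed

definition addgrp :: "'a::ab_group_add monoid" where
  "addgrp = \<lparr>carrier = UNIV, mult = (+), one = 0\<rparr>"

lemma addgrp_group: "group (addgrp :: 'a::ab_group_add monoid)"
  by (rule groupI) (auto simp: addgrp_def add.assoc intro: exI[of _ "- x" for x] bexI[of _ "- x" for x])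

lemma char2_card_prime:
  assumes c2: "(1::'a::{field,finite}) + 1 = 0" and p: "prime p" and dv: "p dvd CARD('a)"
  shows "p = 2"
proof (rule ccontr)
  assume p2: "p \<noteq> 2"
  let ?G = "addgrp :: 'a monoid"
  have gG: "group ?G" by (rule addgrp_group)
  have xx: "\<And>x::'a. x + x = 0" using c2 by (metis distrib_right mult_1 mult_zero_left)
  from dv obtain m where "CARD('a) = p * m" by auto
  then have ord: "order ?G = p ^ 1 * m" by (simp add: order_def addgrp_def)
  obtain H where H: "subgroup H ?G" "card H = p ^ 1"
    using sylow_thm[OF p gG ord] by (auto simp: addgrp_def)
  have "p \<ge> 3" using p p2 prime_ge_2_nat by (metis le_antisym not_less_eq_eq numeral_2_eq_2 numeral_3_eq_3)
  then have "card H \<ge> 3" using H by simp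
  then have "\<exists>x\<in>H. x \<noteq> 0"
    by (metis card_le_Suc0_iff_eq card.infinite not_less_eq_eq numeral_3_eq_3 zero_less_Suc le0 order_trans Suc_leD)
  then obtain x where x: "x \<in> H" "x \<noteq> 0" by blast
  have one: "\<one>\<^bsub>?G\<^esub> = 0" by (simp add: addgrp_def)
  have inv: "\<And>y. inv\<^bsub>?G\<^esub> y = y"
    by (rule group.inv_equality[OF gG]) (auto simp: addgrp_def xx)
  have K: "subgroup {0, x} ?G"
    by (rule group.subgroupI[OF gG]) (auto simp: inv, auto simp: addgrp_def xx)
  have "subgroup {0, x} (?G\<lparr>carrier := H\<rparr>)"
    apply (rule group.subgroup_incl[OF gG K H(1)])
    using x subgroup.one_closed[OF H(1)] one by auto
  moreover have gH: "group (?G\<lparr>carrier := H\<rparr>)" using subgroup.subgroup_is_group[OF H(1) gG] .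
  ultimately have "card (rcosets\<^bsub>?G\<lparr>carrier := H\<rparr>\<^esub> {0, x}) * card {0, x} = order (?G\<lparr>carrier := H\<rparr>)"
    using group.lagrange by blast
  then have "2 dvd p" using x H(2) by (simp add: order_def) (metis dvd_triv_left mult_2)
  then show False using p p2 unfolding prime_nat_iff by force
qed

lemma all_prime_factors_2:
  fixes n :: nat
  assumes "n > 0" "\<And>p. prime p \<Longrightarrow> p dvd n \<Longrightarrow> p = 2"
  shows "\<exists>k. n = 2 ^ k"
  using assms
proof (induction n rule: less_induct)
  case (less n)
  show ?case
  proof (cases "n = 1")
    case True then show ?thesis by (intro exI[of _ 0]) simp
  next
    case False
    then obtain p where p: "prime p" "p dvd n" using less.prems(1)
      by (metis prime_factor_nat)
    then have "p = 2" using less.prems by blast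
    then obtain m where m: "n = 2 * m" using p by auto
    then have "m < n" "m > 0" using less.prems(1) by auto
    moreover have "\<And>p. prime p \<Longrightarrow> p dvd m \<Longrightarrow> p = 2" using less.prems m by auto
    ultimately obtain k where "m = 2 ^ k" using less.IH by blast
    then show ?thesis using m by (intro exI[of _ "Suc k"]) simp
  qed
qed


(* ---- part T3 ---- *)
definition cj :: "nat \<Rightarrow> 'a::field \<Rightarrow> 'a" where "cj q x = x ^ q"

context
  fixes q :: nat
  assumes cardq: "CARD('k::{field,finite}) = q ^ 2" and evq: "even q"
begin

lemma c2: "(1::'k) + 1 = 0"
  using char2_from_even_card[where 'a='k] cardq evq by simp

lemma two_k: "(2::'k) = 0" using c2 by (metis one_add_one)

lemma uminus_k[simp]: "- (x::'k) = x"
  using c2 by (metis add_eq_0_iff2 distrib_right mult_1 mult_zero_left)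

lemma diff_k[simp]: "(x::'k) - y = x + y"
  by (metis diff_conv_add_uminus uminus_k)

lemma add_self_k[simp]: "(x::'k) + x = 0"
  by (metis diff_k diff_self)

lemma q_pos: "q > 0"
  using cardq finite_UNIV_card_ge_0[where 'a='k] by (cases q) auto

lemma q_pow2: "\<exists>m. q = 2 ^ m"
proof (rule all_prime_factors_2)
  show "q > 0" by (rule q_pos)
  fix p :: nat assume p: "prime p" "p dvd q"
  then have "p dvd CARD('k)" using cardq by (simp add: power2_eq_square)
  then show "p = 2" using char2_card_prime[OF c2 p(1)] by blast
qed

lemma pow2_add: "((x::'k) + y) ^ (2 ^ m) = x ^ (2 ^ m) + y ^ (2 ^ m)"
proof (induction m)
  case 0 then show ?case by simp
next
  case (Suc m)
  have "(x + y) ^ (2 ^ Suc m) = ((x + y) ^ (2 ^ m)) ^ 2" by (simp add: power_mult[symmetric] mult.commute)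
  also have "\<dots> = (x ^ (2 ^ m) + y ^ (2 ^ m)) ^ 2" using Suc by simp
  also have "\<dots> = (x ^ (2 ^ m)) ^ 2 + (y ^ (2 ^ m)) ^ 2" by (simp add: power2_sum two_k)
  also have "\<dots> = x ^ (2 ^ Suc m) + y ^ (2 ^ Suc m)" by (simp add: power_mult[symmetric] mult.commute)
  finally show ?case .
qed

lemma cj_add[simp]: "cj q ((x::'k) + y) = cj q x + cj q y"
  using q_pow2 pow2_add unfolding cj_def by blast

lemma cj_mult[simp]: "cj q ((x::'k) * y) = cj q x * cj q y"
  unfolding cj_def by (simp add: power_mult_distrib)

lemma cj_0[simp]: "cj q (0::'k) = 0" using q_pos unfolding cj_def by simp
lemma cj_1[simp]: "cj q (1::'k) = 1" unfolding cj_def by simp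

lemma cj_cj[simp]: "cj q (cj q (x::'k)) = x"
  unfolding cj_def using fin_field_pow_card[of x] cardq by (simp add: power_mult[symmetric] power2_eq_square)

lemma cj_eq0[simp]: "cj q (x::'k) = 0 \<longleftrightarrow> x = 0"
  by (metis cj_0 cj_cj)

lemma cj_inj: "cj q (x::'k) = cj q y \<longleftrightarrow> x = y"
  by (metis cj_cj)

lemma cj_inverse[simp]: "cj q (inverse (x::'k)) = inverse (cj q x)"
  unfolding cj_def by (simp add: power_inverse)

lemma cj_divide[simp]: "cj q ((x::'k) / y) = cj q x / cj q y"
  unfolding cj_def by (simp add: power_divide)

lemma cj_sum: "cj q (sum (f :: _ \<Rightarrow> 'k) A) = sum (\<lambda>i. cj q (f i)) A"
  by (induction A rule: infinite_finite_induct) auto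

text \<open>isotropic orthogonal vectors in dimension 3 are dependent, coordinate form\<close>
lemma W0:
  fixes u1 u2 u3 v1 v2 v3 :: 'k
  assumes uu: "u1 * cj q u1 + u2 * cj q u2 + u3 * cj q u3 = 0"
    and vv: "v1 * cj q v1 + v2 * cj q v2 + v3 * cj q v3 = 0"
    and uv: "u1 * cj q v1 + u2 * cj q v2 + u3 * cj q v3 = 0"
  shows "u2 * v3 = u3 * v2 \<and> u3 * v1 = u1 * v3 \<and> u1 * v2 = u2 * v1"
proof (rule ccontr)
  define U1 where "U1 = cj q u1"
  define U2 where "U2 = cj q u2"
  define U3 where "U3 = cj q u3"
  define V1 where "V1 = cj q v1"
  define V2 where "V2 = cj q v2"
  define V3 where "V3 = cj q v3"
  define w1 where "w1 = u2 * v3 - u3 * v2"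
  define w2 where "w2 = u3 * v1 - u1 * v3"
  define w3 where "w3 = u1 * v2 - u2 * v1"
  assume "\<not> ?thesis"
  then have wnz: "w1 \<noteq> 0 \<or> w2 \<noteq> 0 \<or> w3 \<noteq> 0" unfolding w1_def w2_def w3_def
    by (metis diff_k add_self_k add_left_cancel add_0)
  have vu: "v1 * U1 + v2 * U2 + v3 * U3 = 0"
    using arg_cong[OF uv, of "cj q"] unfolding U1_def U2_def U3_def by (simp add: mult.commute)
  have uu': "u1 * U1 + u2 * U2 + u3 * U3 = 0" using uu unfolding U1_def U2_def U3_def .
  have vv': "v1 * V1 + v2 * V2 + v3 * V3 = 0" using vv unfolding V1_def V2_def V3_def .
  have uv': "u1 * V1 + u2 * V2 + u3 * V3 = 0" using uv unfolding V1_def V2_def V3_def .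
  have Uw: "U2 * w3 - U3 * w2 = 0" "U3 * w1 - U1 * w3 = 0" "U1 * w2 - U2 * w1 = 0"
    unfolding w1_def w2_def w3_def
    using uu' vu by algebra+
  have Vw: "V2 * w3 - V3 * w2 = 0" "V3 * w1 - V1 * w3 = 0" "V1 * w2 - V2 * w1 = 0"
    unfolding w1_def w2_def w3_def
    using uv' vv' by algebra+
  have UV: "U2 * V3 - U3 * V2 = 0 \<and> U3 * V1 - U1 * V3 = 0 \<and> U1 * V2 - U2 * V1 = 0"
    using wnz Uw Vw by algebra
  have "cj q w1 = 0" "cj q w2 = 0" "cj q w3 = 0"
    using UV unfolding w1_def w2_def w3_def U1_def U2_def U3_def V1_def V2_def V3_def by simp_all
  then show False using wnz by simp
qed

end


(* ---- part T4 ---- *)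
definition hf :: "nat \<Rightarrow> 'a::field^3 \<Rightarrow> 'a^3 \<Rightarrow> 'a" where
  "hf q u v = u$1 * cj q (v$1) + u$2 * cj q (v$2) + u$3 * cj q (v$3)"

lemma vec3_eq: "(x::'a^3) = y \<longleftrightarrow> x$1 = y$1 \<and> x$2 = y$2 \<and> x$3 = y$3"
  by (auto simp: vec_eq_iff forall_3)

lemma cases3: fixes i :: 3 shows "(i = 1 \<Longrightarrow> P) \<Longrightarrow> (i = 2 \<Longrightarrow> P) \<Longrightarrow> (i = 3 \<Longrightarrow> P) \<Longrightarrow> P"
  using exhaust_3[of i] by blast

lemma mv3: "((A::'a::semiring_1^3^'m) *v x) $ i = A$i$1 * x$1 + A$i$2 * x$2 + A$i$3 * x$3"
  by (simp add: matrix_vector_mult_def sum_3)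

context
  fixes q :: nat
  assumes cardq: "CARD('k::{field,finite}) = q ^ 2" and evq: "even q"
begin

lemmas fldT4 = c2[OF cardq evq] uminus_k[OF cardq evq] diff_k[OF cardq evq] add_self_k[OF cardq evq]
  cj_add[OF cardq evq] cj_mult[OF cardq evq] cj_0[OF cardq evq] cj_1[OF cardq evq] cj_cj[OF cardq evq]
  cj_eq0[OF cardq evq] cj_inverse[OF cardq evq] cj_divide[OF cardq evq]

lemma hf_add1[simp]: "hf q (u + v) (w::'k^3) = hf q u w + hf q v w"
  by (simp add: hf_def algebra_simps)
lemma hf_add2[simp]: "hf q w (u + v :: 'k^3) = hf q w u + hf q w v"
  by (simp add: hf_def algebra_simps fldT4)
lemma hf_smult1[simp]: "hf q (c *s u) (w::'k^3) = c * hf q u w"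
  by (simp add: hf_def algebra_simps)
lemma hf_smult2[simp]: "hf q w (c *s u :: 'k^3) = cj q c * hf q w u"
  by (simp add: hf_def algebra_simps fldT4)
lemma hf_zero1[simp]: "hf q 0 (w::'k^3) = 0" by (simp add: hf_def)
lemma hf_zero2[simp]: "hf q w (0::'k^3) = 0" by (simp add: hf_def fldT4)
lemma hf_sym: "hf q v (u::'k^3) = cj q (hf q u v)"
  by (simp add: hf_def fldT4 mult.commute)

lemma hf_nondeg: assumes "(z::'k^3) \<noteq> 0" shows "\<exists>v. hf q z v \<noteq> 0"
proof -
  from assms obtain i where "z$i \<noteq> 0" by (auto simp: vec_eq_iff)
  then show ?thesis
    by (intro exI[of _ "\<chi> j. if j = i then 1 else 0"]) (cases i rule: cases3; simp add: hf_def fldT4)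
qed

lemma hf_nondeg2: assumes "(z::'k^3) \<noteq> 0" shows "\<exists>v. hf q v z \<noteq> 0"
  using hf_nondeg[OF assms] by (metis hf_sym fldT4(10))

lemma W:
  assumes "hf q u u = 0" "hf q v v = 0" "hf q u v = 0" "(v::'k^3) \<noteq> 0"
  shows "\<exists>t. u = t *s v"
proof -
  have cr: "u$2 * v$3 = u$3 * v$2 \<and> u$3 * v$1 = u$1 * v$3 \<and> u$1 * v$2 = u$2 * v$1"
    using W0[OF cardq evq, of "u$1" "u$2" "u$3" "v$1" "v$2" "v$3"] assms(1-3) unfolding hf_def by blast
  from assms(4) obtain i where i: "v$i \<noteq> 0" by (auto simp: vec_eq_iff)
  show ?thesis
  proof (intro exI[of _ "u$i / v$i"])
    show "u = (u$i / v$i) *s v"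
      using i cr by (cases i rule: cases3) (auto simp: vec3_eq field_simps)
  qed
qed

definition ct :: "nat \<Rightarrow> 'a::field^3^3 \<Rightarrow> 'a^3^3" where "ct q' A = conj_transpose q' A"

lemma hf_adj: "hf q (A *v u) (v::'k^3) = hf q u (conj_transpose q A *v v)"
  unfolding hf_def mv3 conj_transpose_def by (simp add: fldT4 cj_def[symmetric] algebra_simps)

lemma unit_left: "(A::'k^3^3) ** conj_transpose q A = mat 1 \<Longrightarrow> conj_transpose q A ** A = mat 1"
  using matrix_left_right_inverse by blast

lemma hf_unit: assumes "(A::'k^3^3) ** conj_transpose q A = mat 1"
  shows "hf q (A *v u) (A *v v) = hf q u v"
proof -
  have "hf q (A *v u) (A *v v) = hf q u ((conj_transpose q A ** A) *v v)"
    by (simp add: hf_adj matrix_vector_mul_assoc)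
  also have "\<dots> = hf q u v" using unit_left[OF assms] by simp
  finally show ?thesis .
qed

end


(* ---- part T5 ---- *)
context
  fixes q :: nat
  assumes cardq: "CARD('k::{field,finite}) = q ^ 2" and evq: "even q"
begin

lemmas fldT5 = c2[OF cardq evq] uminus_k[OF cardq evq] diff_k[OF cardq evq] add_self_k[OF cardq evq]
  cj_add[OF cardq evq] cj_mult[OF cardq evq] cj_0[OF cardq evq] cj_1[OF cardq evq] cj_cj[OF cardq evq]
  cj_eq0[OF cardq evq] cj_inverse[OF cardq evq] cj_divide[OF cardq evq] two_k[OF cardq evq]
lemmas hfsT5 = hf_add1[OF cardq evq] hf_add2[OF cardq evq] hf_smult1[OF cardq evq] hf_smult2[OF cardq evq]
  hf_zero1[OF cardq evq] hf_zero2[OF cardq evq]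

lemma vadd_self[simp]: "(x::'k^3) + x = 0"
  by (simp add: vec3_eq fldT5)

lemma inv_rep:
  assumes un: "(a::'k^3^3) ** conj_transpose q a = mat 1" and sq: "a ** a = mat 1" and ne: "a \<noteq> mat 1"
  shows "\<exists>z \<alpha>. z \<noteq> 0 \<and> hf q z z = 0 \<and> \<alpha> \<noteq> 0 \<and> cj q \<alpha> = \<alpha> \<and> (\<forall>u. a *v u = u + (\<alpha> * hf q u z) *s z)"
proof -
  define N where "N u = a *v u + u" for u
  have aa: "a *v (a *v u) = u" for u by (simp add: matrix_vector_mul_assoc sq)
  have NN: "N (N u) = 0" for u
    by (simp add: N_def aa matrix_vector_right_distrib vec3_eq fldT5)
  have herm: "hf q (N u) v = hf q u (N v)" for u v
  proof -
    have "hf q (a *v u) v = hf q (a *v u) (a *v (a *v v))" by (simp add: aa)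
    also have "\<dots> = hf q u (a *v v)" by (rule hf_unit[OF cardq evq un])
    finally show ?thesis by (simp add: N_def hfsT5)
  qed
  have iso: "hf q (N u) (N v) = 0" for u v
    using herm[of u "N v"] NN[of v] hfsT5 by simp
  from ne obtain u0 where u0: "a *v u0 \<noteq> u0"
    using matrix_eq[of a "mat 1"] by auto
  define z where "z = N u0"
  have znz: "z \<noteq> 0"
  proof
    assume "z = 0"
    then have "a *v u0 + u0 + u0 = u0" by (simp add: z_def N_def)
    then show False using u0 by (simp add: add.assoc)
  qed
  have zz: "hf q z z = 0" unfolding z_def by (rule iso)
  have "\<forall>u. \<exists>t. N u = t *s z"
  proof
    fix u
    have "hf q (N u) z = 0" unfolding z_def by (rule iso)
    then show "\<exists>t. N u = t *s z" using W[OF cardq evq iso zz _ znz] by blast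
  qed
  then obtain tf where tf: "\<And>u. N u = tf u *s z" by metis
  obtain v0 where v0: "hf q z v0 \<noteq> 0" using hf_nondeg[OF cardq evq znz] by blast
  define e where "e = hf q z v0"
  define s where "s = tf v0"
  define \<alpha> where "\<alpha> = cj q s / e"
  have key: "tf u = \<alpha> * hf q u z" for u
  proof -
    have "tf u * e = cj q s * hf q u z"
      using herm[of u v0] unfolding e_def s_def tf hfsT5 .
    then show ?thesis unfolding \<alpha>_def using v0 e_def by (simp add: field_simps)
  qed
  have rep: "a *v u = u + (\<alpha> * hf q u z) *s z" for u
  proof -
    have "a *v u = N u + u" by (simp add: N_def add.assoc)
    then show ?thesis by (simp add: tf key add.commute)
  qed
  have anz: "\<alpha> \<noteq> 0"
  proof
    assume "\<alpha> = 0"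
    then have "N u0 = 0" using tf key by simp
    then show False using znz z_def by simp
  qed
  have se: "s * e = cj q s * cj q e"
  proof -
    have "tf v0 * e = cj q s * hf q v0 z"
      using herm[of v0 v0] unfolding e_def s_def tf hfsT5 .
    then show ?thesis unfolding s_def e_def using hf_sym[OF cardq evq, of v0 z] by simp
  qed
  have "cj q \<alpha> = \<alpha>"
  proof -
    have ce: "cj q e \<noteq> 0" using v0 e_def fldT5 by simp
    have "cj q \<alpha> = s / cj q e" unfolding \<alpha>_def by (simp add: fldT5)
    also have "\<dots> = \<alpha>" unfolding \<alpha>_def using ce v0 e_def se by (simp add: field_simps)
    finally show ?thesis .
  qed
  then show ?thesis using znz zz anz rep by blast
qed

end


(* ---- part T6 ---- *)
lemma mv_smult: "(A::'a::comm_ring_1^3^3) *v (c *s x) = c *s (A *v x)"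
  by (simp add: vec3_eq mv3 algebra_simps)

lemma mv_add: "(A::'a::comm_ring_1^3^3) *v (x + y) = A *v x + A *v y"
  by (simp add: matrix_vector_right_distrib)

context
  fixes q :: nat
  assumes cardq: "CARD('k::{field,finite}) = q ^ 2" and evq: "even q"
begin

lemmas fldT6 = c2[OF cardq evq] uminus_k[OF cardq evq] diff_k[OF cardq evq] add_self_k[OF cardq evq]
  cj_add[OF cardq evq] cj_mult[OF cardq evq] cj_0[OF cardq evq] cj_1[OF cardq evq] cj_cj[OF cardq evq]
  cj_eq0[OF cardq evq] cj_inverse[OF cardq evq] cj_divide[OF cardq evq] two_k[OF cardq evq]
lemmas hfsT6 = hf_add1[OF cardq evq] hf_add2[OF cardq evq] hf_smult1[OF cardq evq] hf_smult2[OF cardq evq]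
  hf_zero1[OF cardq evq] hf_zero2[OF cardq evq]

lemma comm_if_orth:
  assumes ra: "\<And>u. (a::'k^3^3) *v u = u + (\<alpha> * hf q u z) *s z"
    and rb: "\<And>u. (b::'k^3^3) *v u = u + (\<beta> * hf q u y) *s y"
    and zz: "hf q z z = 0" and yy: "hf q y y = 0" and zy: "hf q z y = 0"
  shows "a ** b = b ** a"
proof -
  have yz: "hf q y z = 0" using zy hf_sym[OF cardq evq, of y z] fldT6 by simp
  show ?thesis
    unfolding matrix_eq
  proof
    fix u
    show "(a ** b) *v u = (b ** a) *v u"
      unfolding matrix_vector_mul_assoc[symmetric] ra rb
      by (simp add: hfsT6 zz yy zy yz algebra_simps)
  qed
qed

lemma A_mat:
  assumes ua: "(a::'k^3^3) ** conj_transpose q a = mat 1" and sa: "a ** a = mat 1" and na: "a \<noteq> mat 1"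
    and ub: "(b::'k^3^3) ** conj_transpose q b = mat 1" and sb: "b ** b = mat 1" and nb: "b \<noteq> mat 1"
    and uc: "(c::'k^3^3) ** conj_transpose q c = mat 1" and sc: "c ** c = mat 1" and nc: "c \<noteq> mat 1"
    and nab: "a ** b \<noteq> b ** a"
    and cg: "c ** (a ** b) = (a ** b) ** c"
  shows False
proof -
  obtain z \<alpha> where za: "z \<noteq> 0" "hf q z z = 0" "\<alpha> \<noteq> 0" "cj q \<alpha> = \<alpha>"
    and ra: "\<And>u. a *v u = u + (\<alpha> * hf q u z) *s z"
    using inv_rep[OF cardq evq ua sa na] by blast
  obtain y \<beta> where yb: "y \<noteq> 0" "hf q y y = 0" "\<beta> \<noteq> 0" "cj q \<beta> = \<beta>"
    and rb: "\<And>u. b *v u = u + (\<beta> * hf q u y) *s y"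
    using inv_rep[OF cardq evq ub sb nb] by blast
  obtain x \<gamma> where xc: "x \<noteq> 0" "hf q x x = 0" "\<gamma> \<noteq> 0" "cj q \<gamma> = \<gamma>"
    and rc: "\<And>u. c *v u = u + (\<gamma> * hf q u x) *s x"
    using inv_rep[OF cardq evq uc sc nc] by blast
  define d where "d = hf q z y"
  have dnz: "d \<noteq> 0" using comm_if_orth[OF ra rb za(2) yb(2)] nab d_def by auto
  have yz: "hf q y z = cj q d" using hf_sym[OF cardq evq, of y z] d_def by simp
  define g where "g = a ** b"
  have gu: "hf q (g *v u) (g *v v) = hf q u v" for u v
    unfolding g_def matrix_vector_mul_assoc[symmetric]
    using hf_unit[OF cardq evq ua] hf_unit[OF cardq evq ub] by simp
  have cgv: "c *v (g *v u) = g *v (c *v u)" for u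
    using cg unfolding g_def by (simp add: matrix_vector_mul_assoc)
  have eq1: "(\<gamma> * hf q (g *v u) x) *s x = (\<gamma> * hf q u x) *s (g *v x)" for u
    using cgv[of u] unfolding rc mv_add mv_smult by simp
  have scal: "t = s" if "t *s x = s *s x" for t s
  proof -
    from xc(1) obtain i where "x$i \<noteq> 0" by (auto simp: vec_eq_iff)
    then show ?thesis using that by (auto simp: vec_eq_iff)
  qed
  obtain u1 where u1: "hf q u1 x \<noteq> 0" using hf_nondeg2[OF cardq evq xc(1)] by blast
  define \<mu> where "\<mu> = hf q (g *v u1) x / hf q u1 x"
  have gx: "g *v x = \<mu> *s x"
  proof -
    have "(1 / (\<gamma> * hf q u1 x)) *s ((\<gamma> * hf q (g *v u1) x) *s x) = (1 / (\<gamma> * hf q u1 x)) *s ((\<gamma> * hf q u1 x) *s (g *v x))"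
      using eq1[of u1] by simp
    then show ?thesis using u1 xc(3) unfolding \<mu>_def by (simp add: field_simps)
  qed
  have hgx: "hf q (g *v u) x = \<mu> * hf q u x" for u
  proof -
    have "(\<gamma> * hf q (g *v u) x) *s x = (\<gamma> * (\<mu> * hf q u x)) *s x"
      using eq1[of u] unfolding gx by (simp add: mult.assoc mult.commute mult.left_commute)
    then have "\<gamma> * hf q (g *v u) x = \<gamma> * (\<mu> * hf q u x)" by (rule scal)
    then show ?thesis using xc(3) by simp
  qed
  have nm: "cj q \<mu> * \<mu> = 1"
  proof -
    have "hf q u1 x = hf q (g *v u1) (g *v x)" using gu by simp
    also have "\<dots> = cj q \<mu> * (\<mu> * hf q u1 x)" unfolding gx hfsT6 hgx ..
    finally show ?thesis using u1 by (simp add: field_simps)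
  qed
  have bx: "b *v x = \<mu> *s (a *v x)"
  proof -
    have "a *v (g *v x) = b *v x" unfolding g_def matrix_vector_mul_assoc matrix_mul_assoc sa by simp
    then show ?thesis unfolding gx mv_smult by simp
  qed
  define p where "p = hf q x y"
  define r where "r = hf q x z"
  have E: "x + (\<beta> * p) *s y = \<mu> *s (x + (\<alpha> * r) *s z)"
    using bx unfolding ra rb p_def r_def .
  have zx: "hf q z x = cj q r" using hf_sym[OF cardq evq, of z x] r_def by simp
  have yx: "hf q y x = cj q p" using hf_sym[OF cardq evq, of y x] p_def by simp
  have e1: "r + \<beta> * p * cj q d = \<mu> * r"
    using arg_cong[OF E, of "\<lambda>v. hf q v z"] za(2) yz unfolding hfsT6 by (simp add: r_def algebra_simps)
  have e2: "p = \<mu> * (p + \<alpha> * r * d)"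
    using arg_cong[OF E, of "\<lambda>v. hf q v y"] yb(2) unfolding hfsT6 by (simp add: p_def d_def algebra_simps)
  have e3: "\<beta> * p * cj q p = \<mu> * (\<alpha> * r * cj q r)"
    using arg_cong[OF E, of "\<lambda>v. hf q v x"] xc(2) yx zx unfolding hfsT6 by (simp add: algebra_simps)
  show False
  proof (cases "r = 0")
    case True
    then have "p = 0" using e3 yb(3) fldT6 by simp
    obtain t where t: "x = t *s z" using W[OF cardq evq xc(2) za(2) _ za(1)] True r_def by auto
    then have "t * d = 0" using \<open>p = 0\<close> p_def d_def hfsT6 by simp
    then have "t = 0" using dnz by simp
    then show False using t xc(1) by simp
  next
    case False
    have mu: "\<mu> = \<beta> * p * cj q p / (\<alpha> * r * cj q r)"
      using e3 False za(3) fldT6 by (simp add: field_simps)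
    have "cj q \<mu> = \<mu>" unfolding mu using za(4) yb(4) fldT6 by (simp add: mult.commute mult.left_commute mult.assoc)
    then have "\<mu> * \<mu> = 1" using nm by simp
    then have "(\<mu> + 1) * (\<mu> + 1) = 0" by (simp add: algebra_simps fldT6)
    then have "\<mu> = 1" by (metis add_self_k[OF cardq evq] mult_eq_0_iff add_right_cancel add_0)
    then have "\<alpha> * r * d = 0" using e2 by simp
    then show False using za(3) False dnz by simp
  qed
qed

end


(* ---- part T7 ---- *)
lemma mat3_eq: "(A::'a^3^3) = B \<longleftrightarrow> (\<forall>i j. A$i$j = B$i$j)"
  by (auto simp: vec_eq_iff)

lemma SU3_carrier: "A \<in> carrier (SU3 q) \<longleftrightarrow> A ** conj_transpose q A = mat 1 \<and> det A = 1"
  by (simp add: SU3_def)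
lemma SU3_mult[simp]: "A \<otimes>\<^bsub>SU3 q\<^esub> B = A ** B" by (simp add: SU3_def)
lemma SU3_one[simp]: "\<one>\<^bsub>SU3 q\<^esub> = mat 1" by (simp add: SU3_def)

context
  fixes q :: nat
  assumes cardq: "CARD('k::{field,finite}) = q ^ 2" and evq: "even q"
begin

lemmas fldT7 = c2[OF cardq evq] uminus_k[OF cardq evq] diff_k[OF cardq evq] add_self_k[OF cardq evq]
  cj_add[OF cardq evq] cj_mult[OF cardq evq] cj_0[OF cardq evq] cj_1[OF cardq evq] cj_cj[OF cardq evq]
  cj_eq0[OF cardq evq] cj_inverse[OF cardq evq] cj_divide[OF cardq evq] two_k[OF cardq evq]

lemma ct_entry: "conj_transpose q (A::'k^3^3) $ i $ j = cj q (A$j$i)"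
  by (simp add: conj_transpose_def cj_def)

lemma ct_mult: "conj_transpose q ((A::'k^3^3) ** B) = conj_transpose q B ** conj_transpose q A"
  by (simp add: vec_eq_iff ct_entry matrix_matrix_mult_def cj_sum[OF cardq evq] fldT7 mult.commute)

lemma ct_ct[simp]: "conj_transpose q (conj_transpose q (A::'k^3^3)) = A"
  by (simp add: vec_eq_iff ct_entry fldT7)

lemma ct_one[simp]: "conj_transpose q (mat 1 :: 'k^3^3) = mat 1"
  by (simp add: vec_eq_iff ct_entry mat_def fldT7)

lemma SU3_group: "group (SU3 q :: ('k^3^3) monoid)"
proof (rule groupI)
  fix x y :: "'k^3^3"
  assume x: "x \<in> carrier (SU3 q)" and y: "y \<in> carrier (SU3 q)"
  have "(x ** y) ** conj_transpose q (x ** y) = x ** (y ** conj_transpose q y) ** conj_transpose q x"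
    by (simp add: ct_mult matrix_mul_assoc)
  also have "\<dots> = mat 1" using x y by (simp add: SU3_carrier)
  finally show "x \<otimes>\<^bsub>SU3 q\<^esub> y \<in> carrier (SU3 q)"
    using x y by (simp add: SU3_carrier det_mul)
next
  show "\<one>\<^bsub>SU3 q\<^esub> \<in> carrier (SU3 q :: ('k^3^3) monoid)" by (simp add: SU3_carrier)
next
  fix x y z :: "'k^3^3"
  show "x \<otimes>\<^bsub>SU3 q\<^esub> y \<otimes>\<^bsub>SU3 q\<^esub> z = x \<otimes>\<^bsub>SU3 q\<^esub> (y \<otimes>\<^bsub>SU3 q\<^esub> z)"
    by (simp add: matrix_mul_assoc)
next
  fix x :: "'k^3^3"
  show "\<one>\<^bsub>SU3 q\<^esub> \<otimes>\<^bsub>SU3 q\<^esub> x = x" by simp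
next
  fix x :: "'k^3^3"
  assume x: "x \<in> carrier (SU3 q)"
  then have l: "conj_transpose q x ** x = mat 1"
    using matrix_left_right_inverse by (auto simp: SU3_carrier)
  then have "det (conj_transpose q x) * det x = 1" by (metis det_I det_mul)
  then have "det (conj_transpose q x) = 1" using x by (simp add: SU3_carrier)
  then show "\<exists>y\<in>carrier (SU3 q). y \<otimes>\<^bsub>SU3 q\<^esub> x = \<one>\<^bsub>SU3 q\<^esub>"
    using l by (intro bexI[of _ "conj_transpose q x"]) (auto simp: SU3_carrier)
qed

lemma SU3_finite: "finite (carrier (SU3 q :: ('k^3^3) monoid))" by simp

lemma SU3_inv: "a \<in> involutions (SU3 q :: ('k^3^3) monoid) \<longleftrightarrow>
   a ** conj_transpose q a = mat 1 \<and> det a = 1 \<and> a \<noteq> mat 1 \<and> a ** a = mat 1"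
  by (auto simp: involutions_def SU3_carrier)

lemma SU3_A:
  assumes "a \<in> involutions (SU3 q :: ('k^3^3) monoid)" "b \<in> involutions (SU3 q :: ('k^3^3) monoid)"
    "c \<in> involutions (SU3 q :: ('k^3^3) monoid)"
    "a \<otimes>\<^bsub>SU3 q\<^esub> b \<noteq> b \<otimes>\<^bsub>SU3 q\<^esub> a"
  shows "c \<otimes>\<^bsub>SU3 q\<^esub> (a \<otimes>\<^bsub>SU3 q\<^esub> b) \<noteq> (a \<otimes>\<^bsub>SU3 q\<^esub> b) \<otimes>\<^bsub>SU3 q\<^esub> c"
  using A_mat[OF cardq evq, of a b c] assms unfolding SU3_inv by auto

definition P12 :: "'k^3^3" where
  "P12 = (\<chi> i j. if (i = 1 \<and> j = 2) \<or> (i = 2 \<and> j = 1) \<or> (i = 3 \<and> j = 3) then 1 else 0)"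
definition P13 :: "'k^3^3" where
  "P13 = (\<chi> i j. if (i = 1 \<and> j = 3) \<or> (i = 3 \<and> j = 1) \<or> (i = 2 \<and> j = 2) then 1 else 0)"

lemma SU3_Cex: "\<exists>a \<in> involutions (SU3 q :: ('k^3^3) monoid). \<exists>b \<in> involutions (SU3 q :: ('k^3^3) monoid).
   a \<otimes>\<^bsub>SU3 q\<^esub> b \<noteq> b \<otimes>\<^bsub>SU3 q\<^esub> a"
proof -
  have "P12 \<in> involutions (SU3 q :: ('k^3^3) monoid)"
    unfolding SU3_inv
    by (simp add: mat3_eq forall_3 P12_def matrix_matrix_mult_def sum_3 ct_entry mat_def det_3 fldT7)
  moreover have "P13 \<in> involutions (SU3 q :: ('k^3^3) monoid)"
    unfolding SU3_inv
    by (simp add: mat3_eq forall_3 P13_def matrix_matrix_mult_def sum_3 ct_entry mat_def det_3 fldT7)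
  moreover have "P12 \<otimes>\<^bsub>SU3 q\<^esub> P13 \<noteq> P13 \<otimes>\<^bsub>SU3 q\<^esub> P12"
    by (simp add: mat3_eq forall_3 P12_def P13_def matrix_matrix_mult_def sum_3)
  ultimately show ?thesis by blast
qed

end


(* ---- part T8 ---- *)
lemma det_on_cong:
  assumes "\<And>a b. a \<in> C \<Longrightarrow> b \<in> C \<Longrightarrow> M a b = M' a b"
  shows "det_on C M = det_on C M'"
  unfolding det_on_def
proof (rule sum.cong[OF refl])
  fix p assume "p \<in> {p. p permutes C}"
  then have p: "p permutes C" by simp
  show "of_int (sign p) * (\<Prod>a\<in>C. M a (p a)) = of_int (sign p) * (\<Prod>a\<in>C. M' a (p a))"
    using assms permutes_in_image[OF p] by (auto intro!: prod.cong)
qed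

lemma det_on_ext:
  fixes C :: "'a::finite set" and M :: "'a \<Rightarrow> 'a \<Rightarrow> complex"
  defines "M' \<equiv> (\<lambda>a b. if a \<in> C \<and> b \<in> C then M a b else if a = b then 1 else 0)"
  shows "det_on C M = det_on UNIV M'"
proof -
  have fin: "finite {p. p permutes (UNIV::'a set)}" by (rule finite_permutations) simp
  have "det_on UNIV M' = (\<Sum>p\<in>{p. p permutes C}. of_int (sign p) * (\<Prod>a\<in>UNIV. M' a (p a)))"
    unfolding det_on_def
  proof (rule sum.mono_neutral_right[OF fin])
    show "{p. p permutes C} \<subseteq> {p. p permutes UNIV}" using permutes_subset by blast
    show "\<forall>p\<in>{p. p permutes UNIV} - {p. p permutes C}. of_int (sign p) * (\<Prod>a\<in>UNIV. M' a (p a)) = 0"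
    proof
      fix p assume p: "p \<in> {p. p permutes (UNIV::'a set)} - {p. p permutes C}"
      have "\<exists>a. a \<notin> C \<and> p a \<noteq> a"
      proof (rule ccontr)
        assume "\<not> ?thesis"
        then have "\<forall>a. a \<notin> C \<longrightarrow> p a = a" by blast
        moreover have "\<forall>y. \<exists>!x. p x = y" using p by (auto simp: permutes_def)
        ultimately have "p permutes C" by (simp add: permutes_def)
        then show False using p by simp
      qed
      then obtain a where a: "a \<notin> C" "p a \<noteq> a" by blast
      have "M' a (p a) = 0" using a unfolding M'_def by auto
      then have "(\<Prod>a\<in>UNIV. M' a (p a)) = 0" by (intro prod_zero) auto
      then show "of_int (sign p) * (\<Prod>a\<in>UNIV. M' a (p a)) = 0" by simp
    qed
  qed
  also have "\<dots> = det_on C M"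
    unfolding det_on_def
  proof (rule sum.cong[OF refl])
    fix p assume "p \<in> {p. p permutes C}"
    then have p: "p permutes C" by simp
    have "(\<Prod>a\<in>UNIV. M' a (p a)) = (\<Prod>a\<in>C. M' a (p a))"
      by (rule prod.mono_neutral_right) (use p in \<open>auto simp: M'_def permutes_not_in\<close>)
    also have "\<dots> = (\<Prod>a\<in>C. M a (p a))"
      using permutes_in_image[OF p] by (auto simp: M'_def intro!: prod.cong)
    finally show "of_int (sign p) * (\<Prod>a\<in>UNIV. M' a (p a)) = of_int (sign p) * (\<Prod>a\<in>C. M a (p a))"
      by simp
  qed
  finally show ?thesis by simp
qed

lemma det_on_UNIV:
  fixes M :: "'a::finite \<Rightarrow> 'a \<Rightarrow> complex"
  shows "det_on UNIV M = det (\<chi> i j. M i j)"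
  unfolding det_on_def det_def by (intro sum.cong refl arg_cong2[where f="(*)"] prod.cong) simp_all

lemma det_nz_ker:
  fixes A :: "'b::field^'n^'n"
  assumes "\<And>x. A *v x = 0 \<Longrightarrow> x = 0"
  shows "det A \<noteq> 0"
proof -
  have "\<forall>x. A *v x = 0 \<longrightarrow> x = 0" using assms by blast
  then have "\<exists>B::'b^'n^'n. B ** A = mat 1" by (subst matrix_left_invertible_ker)
  then obtain B :: "'b^'n^'n" where "B ** A = mat 1" by blast
  then have "det B * det A = 1" by (metis det_I det_mul)
  then show ?thesis by auto
qed

lemma det_on_nz:
  fixes C :: "'a::finite set" and M :: "'a \<Rightarrow> 'a \<Rightarrow> complex"
  assumes ker: "\<And>x. \<forall>a\<in>C. (\<Sum>b\<in>C. M a b * x b) = 0 \<Longrightarrow> \<forall>a\<in>C. x a = 0"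
  shows "det_on C M \<noteq> 0"
proof -
  define M' where "M' = (\<lambda>a b. if a \<in> C \<and> b \<in> C then M a b else if a = b then 1 else (0::complex))"
  have "det_on C M = det_on UNIV M'"
    unfolding M'_def by (rule det_on_ext)
  also have "\<dots> = det (\<chi> i j. M' i j)" by (rule det_on_UNIV)
  also have "\<dots> \<noteq> 0"
  proof (rule det_nz_ker)
    fix x :: "complex^'a"
    assume Ax: "(\<chi> i j. M' i j) *v x = 0"
    have row: "(\<Sum>b\<in>UNIV. M' a b * x$b) = 0" for a
      using Ax by (simp add: vec_eq_iff matrix_vector_mult_def)
    have out: "x$a = 0" if "a \<notin> C" for a
    proof -
      have "(\<Sum>b\<in>UNIV. M' a b * x$b) = (\<Sum>b\<in>{a}. M' a b * x$b)"
        by (rule sum.mono_neutral_right) (use that in \<open>auto simp: M'_def\<close>)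
      then show ?thesis using row[of a] that by (simp add: M'_def)
    qed
    have "\<forall>a\<in>C. (\<Sum>b\<in>C. M a b * x$b) = 0"
    proof
      fix a assume a: "a \<in> C"
      have "(\<Sum>b\<in>UNIV. M' a b * x$b) = (\<Sum>b\<in>C. M' a b * x$b)"
        by (rule sum.mono_neutral_right) (use a in \<open>auto simp: M'_def\<close>)
      also have "\<dots> = (\<Sum>b\<in>C. M a b * x$b)" using a by (auto simp: M'_def intro!: sum.cong)
      finally show "(\<Sum>b\<in>C. M a b * x$b) = 0" using row[of a] by simp
    qed
    then have "\<forall>a\<in>C. x$a = 0" using ker[of "\<lambda>b. x$b"] by blast
    then show "x = 0" using out by (auto simp: vec_eq_iff)
  qed
  finally show ?thesis .
qed

lemma kernel_lemma:
  fixes C :: "'a set" and cls :: "'a \<Rightarrow> 'a set" and x :: "'a \<Rightarrow> complex"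
  assumes fin: "finite C" and sub: "\<And>a. a \<in> C \<Longrightarrow> cls a \<subseteq> C" and refl: "\<And>a. a \<in> C \<Longrightarrow> a \<in> cls a"
    and same: "\<And>a b. a \<in> C \<Longrightarrow> b \<in> cls a \<Longrightarrow> cls b = cls a"
    and lt: "\<And>a. a \<in> C \<Longrightarrow> card (cls a) < card C"
    and eq: "\<forall>a\<in>C. (\<Sum>b\<in>C. (if a = b then of_nat (card C) else if b \<in> cls a then of_nat (card (cls a)) else 0) * x b) = 0"
  shows "\<forall>a\<in>C. x a = 0"
proof
  define N where "N = card C"
  define S where "S a = (\<Sum>b\<in>cls a. x b)" for a
  have row: "(\<Sum>b\<in>C. (if a = b then of_nat N else if b \<in> cls a then of_nat (card (cls a)) else 0) * x b)
      = (of_nat N - of_nat (card (cls a))) * x a + of_nat (card (cls a)) * S a" if a: "a \<in> C" for a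
  proof -
    have "(\<Sum>b\<in>C. (if a = b then of_nat N else if b \<in> cls a then of_nat (card (cls a)) else 0) * x b)
      = (\<Sum>b\<in>C. (if a = b then (of_nat N - of_nat (card (cls a))) * x b else 0) + (if b \<in> cls a then of_nat (card (cls a)) * x b else 0))"
      using refl[OF a] by (intro sum.cong) (auto simp: algebra_simps)
    also have "\<dots> = (of_nat N - of_nat (card (cls a))) * x a + (\<Sum>b\<in>C \<inter> cls a. of_nat (card (cls a)) * x b)"
      using a fin by (simp add: sum.distrib sum.inter_restrict)
    also have "C \<inter> cls a = cls a" using sub[OF a] by blast
    finally show ?thesis by (simp add: S_def sum_distrib_left)
  qed
  fix a assume a: "a \<in> C"
  define m where "m = card (cls a)"
  have rowa: "(of_nat N - of_nat m) * x a' + of_nat m * S a = (0::complex)" if a': "a' \<in> cls a" for a'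
  proof -
    have a'C: "a' \<in> C" using sub[OF a] a' by blast
    have "cls a' = cls a" using same[OF a a'] .
    then show ?thesis using row[OF a'C] eq a'C unfolding m_def S_def N_def by simp
  qed
  have "(\<Sum>a'\<in>cls a. (of_nat N - of_nat m) * x a' + of_nat m * S a) = 0"
    using rowa by simp
  then have "(of_nat N - of_nat m) * S a + of_nat m * of_nat m * S a = (0::complex)"
    by (simp add: sum.distrib sum_distrib_left[symmetric] S_def m_def mult.assoc)
  then have "(of_nat (N - m + m * m)) * S a = (0::complex)"
    using lt[OF a] unfolding m_def N_def by (simp add: algebra_simps of_nat_diff)
  moreover have "N - m + m * m \<noteq> 0" using lt[OF a] unfolding m_def N_def by simp
  ultimately have S0: "S a = 0" by (metis mult_eq_0_iff of_nat_eq_0_iff)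
  have "(of_nat N - of_nat m) * x a = (0::complex)" using rowa[OF refl[OF a]] S0 by simp
  moreover have "(of_nat N - of_nat m :: complex) \<noteq> 0" using lt[OF a] unfolding m_def N_def by simp
  ultimately show "x a = 0" by simp
qed


(* ---- part T9 ---- *)
lemma abstract_killing:
  fixes G :: "('g::finite, 'b) monoid_scheme" (structure)
  assumes grp: "group G"
    and HA: "\<And>a b c. a \<in> involutions G \<Longrightarrow> b \<in> involutions G \<Longrightarrow> c \<in> involutions G \<Longrightarrow>
              a \<otimes>\<^bsub>G\<^esub> b \<noteq> b \<otimes>\<^bsub>G\<^esub> a \<Longrightarrow> c \<otimes>\<^bsub>G\<^esub> (a \<otimes>\<^bsub>G\<^esub> b) \<noteq> (a \<otimes>\<^bsub>G\<^esub> b) \<otimes>\<^bsub>G\<^esub> c"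
    and HC: "\<exists>a\<in>involutions G. \<exists>b\<in>involutions G. a \<otimes>\<^bsub>G\<^esub> b \<noteq> b \<otimes>\<^bsub>G\<^esub> a"
  shows "(\<forall>a b. killing_adj G (involutions G) a b \<longleftrightarrow> commuting_adj G (involutions G) a b)
       \<and> killing_reducible G (involutions G) \<and> killing_nondegenerate G (involutions G)"
proof -
  interpret group G by (rule grp)
  define C where "C = involutions G"
  have Cc: "a \<in> carrier G" "a \<noteq> \<one>" "a \<otimes> a = \<one>" if "a \<in> C" for a
    using that by (auto simp: C_def involutions_def)
  have HA': "c \<otimes> (a \<otimes> b) \<noteq> (a \<otimes> b) \<otimes> c" if "a \<in> C" "b \<in> C" "c \<in> C" "a \<otimes> b \<noteq> b \<otimes> a" for a b c
    using HA[of a b c] that unfolding C_def by blast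
  have tr: "a \<otimes> c = c \<otimes> a" if "a \<in> C" "b \<in> C" "c \<in> C" "a \<otimes> b = b \<otimes> a" "b \<otimes> c = c \<otimes> b" for a b c
  proof (rule ccontr)
    assume "a \<otimes> c \<noteq> c \<otimes> a"
    then have ne: "b \<otimes> (a \<otimes> c) \<noteq> (a \<otimes> c) \<otimes> b" using HA'[OF that(1) that(3) that(2)] by blast
    have ca: "a \<in> carrier G" "b \<in> carrier G" "c \<in> carrier G" using Cc that by auto
    have "b \<otimes> (a \<otimes> c) = (b \<otimes> a) \<otimes> c" using ca by (simp add: m_assoc)
    also have "\<dots> = (a \<otimes> b) \<otimes> c" using that by simp
    also have "\<dots> = a \<otimes> (b \<otimes> c)" using ca by (simp add: m_assoc)
    also have "\<dots> = a \<otimes> (c \<otimes> b)" using that by simp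
    also have "\<dots> = (a \<otimes> c) \<otimes> b" using ca by (simp add: m_assoc)
    finally show False using ne by simp
  qed
  define cls where "cls a = {c \<in> C. c \<otimes> a = a \<otimes> c}" for a
  have cent: "grp_centralizer G (a \<otimes> b) \<inter> C =
      (if a = b then C else if a \<otimes> b = b \<otimes> a then cls a else {})" if ab: "a \<in> C" "b \<in> C" for a b
  proof (cases "a = b")
    case True
    then have "a \<otimes> b = \<one>" using Cc ab by simp
    then show ?thesis using True Cc by (auto simp: grp_centralizer_def)
  next
    case False
    have ca: "a \<in> carrier G" "b \<in> carrier G" using Cc ab by auto
    show ?thesis
    proof (cases "a \<otimes> b = b \<otimes> a")
      case comm: True
      have abC: "a \<otimes> b \<in> C"
      proof -
        have "a \<otimes> b \<noteq> \<one>"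
        proof
          assume "a \<otimes> b = \<one>"
          then have "a \<otimes> b = a \<otimes> a" using Cc ab by simp
          then show False using False ca by simp
        qed
        moreover have "(a \<otimes> b) \<otimes> (a \<otimes> b) = \<one>"
        proof -
          have "(a \<otimes> b) \<otimes> (a \<otimes> b) = (a \<otimes> b) \<otimes> (b \<otimes> a)" using comm by simp
          also have "\<dots> = a \<otimes> (b \<otimes> b) \<otimes> a" using ca by (simp add: m_assoc)
          also have "\<dots> = \<one>" using Cc ab ca by simp
          finally show ?thesis .
        qed
        ultimately show ?thesis using ca by (simp add: C_def involutions_def)
      qed
      have aba: "(a \<otimes> b) \<otimes> a = a \<otimes> (a \<otimes> b)"
      proof -
        have "(a \<otimes> b) \<otimes> a = (b \<otimes> a) \<otimes> a" using comm by simp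
        also have "\<dots> = b" using ca Cc ab by (simp add: m_assoc)
        also have "\<dots> = a \<otimes> (a \<otimes> b)" using ca Cc ab by (simp add: m_assoc[symmetric])
        finally show ?thesis .
      qed
      have "grp_centralizer G (a \<otimes> b) \<inter> C = cls a"
      proof (intro equalityI subsetI)
        fix c assume c: "c \<in> grp_centralizer G (a \<otimes> b) \<inter> C"
        then have "c \<in> C" "c \<otimes> (a \<otimes> b) = (a \<otimes> b) \<otimes> c" by (auto simp: grp_centralizer_def)
        then have "c \<otimes> a = a \<otimes> c" using tr[OF \<open>c \<in> C\<close> abC ab(1) _ aba] by blast
        then show "c \<in> cls a" using \<open>c \<in> C\<close> by (simp add: cls_def)
      next
        fix c assume "c \<in> cls a"
        then have c: "c \<in> C" "c \<otimes> a = a \<otimes> c" by (auto simp: cls_def)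
        have cb: "c \<otimes> b = b \<otimes> c" using tr[OF c(1) ab c(2) comm] .
        have cc: "c \<in> carrier G" using Cc c by auto
        have "c \<otimes> (a \<otimes> b) = (c \<otimes> a) \<otimes> b" using ca cc by (simp add: m_assoc)
        also have "\<dots> = a \<otimes> (c \<otimes> b)" using ca cc c by (simp add: m_assoc)
        also have "\<dots> = (a \<otimes> b) \<otimes> c" using ca cc cb by (simp add: m_assoc)
        finally show "c \<in> grp_centralizer G (a \<otimes> b) \<inter> C" using c ca cc by (simp add: grp_centralizer_def)
      qed
      then show ?thesis using False comm by simp
    next
      case nc: False
      have "grp_centralizer G (a \<otimes> b) \<inter> C = {}"
        using HA'[OF ab _ nc] by (auto simp: grp_centralizer_def)
      then show ?thesis using False nc by simp
    qed
  qed
  have adj: "killing_adj G C a b \<longleftrightarrow> commuting_adj G C a b" for a b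
  proof (cases "a \<in> C \<and> b \<in> C \<and> a \<noteq> b")
    case True
    then have "a \<in> cls a" using Cc by (simp add: cls_def)
    then show ?thesis using True cent[of a b] unfolding killing_adj_def commuting_adj_def by auto
  next
    case False
    then show ?thesis unfolding killing_adj_def commuting_adj_def by auto
  qed
  obtain u v where uv: "u \<in> C" "v \<in> C" "u \<otimes> v \<noteq> v \<otimes> u" using HC unfolding C_def by blast
  have red: "killing_reducible G C"
  proof -
    let ?E = "{(x, y). x \<in> C \<and> y \<in> C \<and> killing_adj G C x y}"
    have "y \<in> C \<longrightarrow> u \<otimes> y = y \<otimes> u" if "(u, y) \<in> ?E\<^sup>*" for y
      using that
    proof (induction rule: rtrancl_induct)
      case base then show ?case by simp
    next
      case (step y z)
      then have yz: "y \<in> C" "z \<in> C" "y \<otimes> z = z \<otimes> y" using adj by (auto simp: commuting_adj_def)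
      then show ?case using step.IH tr[OF uv(1) yz(1) yz(2)] by blast
    qed
    then have "(u, v) \<notin> ?E\<^sup>*" using uv by blast
    then show ?thesis unfolding killing_reducible_def killing_irreducible_def graph_connected_def using uv by blast
  qed
  have nd: "killing_nondegenerate G C"
    unfolding killing_nondegenerate_def
  proof (rule det_on_nz)
    fix x :: "'g \<Rightarrow> complex"
    assume row: "\<forall>a\<in>C. (\<Sum>b\<in>C. of_nat (killing G C a b) * x b) = 0"
    have finC: "finite C" by simp
    have kv: "of_nat (killing G C a b) = (if a = b then of_nat (card C) else if b \<in> cls a then of_nat (card (cls a)) else (0::complex))"
      if "a \<in> C" "b \<in> C" for a b
    proof -
      have "b \<in> cls a \<longleftrightarrow> a \<otimes> b = b \<otimes> a" using that by (auto simp: cls_def)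
      then show ?thesis using cent[OF that] unfolding killing_def by auto
    qed
    show "\<forall>a\<in>C. x a = 0"
    proof (rule kernel_lemma[OF finC, of cls])
      show "\<And>a. a \<in> C \<Longrightarrow> cls a \<subseteq> C" by (auto simp: cls_def)
      show "\<And>a. a \<in> C \<Longrightarrow> a \<in> cls a" by (auto simp: cls_def)
      show "cls b = cls a" if "a \<in> C" "b \<in> cls a" for a b
      proof -
        have b: "b \<in> C" "b \<otimes> a = a \<otimes> b" using that by (auto simp: cls_def)
        show ?thesis
        proof (intro equalityI subsetI)
          fix c assume "c \<in> cls b"
          then have c: "c \<in> C" "c \<otimes> b = b \<otimes> c" by (auto simp: cls_def)
          have "c \<otimes> a = a \<otimes> c" using tr[OF c(1) b(1) that(1) c(2) b(2)] .
          then show "c \<in> cls a" using c by (simp add: cls_def)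
        next
          fix c assume "c \<in> cls a"
          then have c: "c \<in> C" "c \<otimes> a = a \<otimes> c" by (auto simp: cls_def)
          have "c \<otimes> b = b \<otimes> c" using tr[OF c(1) that(1) b(1) c(2) b(2)[symmetric]] .
          then show "c \<in> cls b" using c by (simp add: cls_def)
        qed
      qed
      show "card (cls a) < card C" if a: "a \<in> C" for a
      proof (rule psubset_card_mono[OF finC])
        have "u \<notin> cls a \<or> v \<notin> cls a"
        proof (rule ccontr)
          assume "\<not> ?thesis"
          then have "u \<otimes> a = a \<otimes> u" "a \<otimes> v = v \<otimes> a" by (auto simp: cls_def)
          then show False using tr[OF uv(1) a uv(2)] uv(3) by blast
        qed
        then show "cls a \<subset> C" using uv by (auto simp: cls_def)
      qed
      show "\<forall>a\<in>C. (\<Sum>b\<in>C. (if a = b then of_nat (card C) else if b \<in> cls a then of_nat (card (cls a)) else 0) * x b) = 0"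
      proof
        fix a assume a: "a \<in> C"
        have "(\<Sum>b\<in>C. (if a = b then of_nat (card C) else if b \<in> cls a then of_nat (card (cls a)) else 0) * x b)
           = (\<Sum>b\<in>C. of_nat (killing G C a b) * x b)"
        proof (rule sum.cong[OF refl])
          fix b assume b: "b \<in> C"
          show "(if a = b then of_nat (card C) else if b \<in> cls a then of_nat (card (cls a)) else 0) * x b
             = of_nat (killing G C a b) * x b" using kv[OF a b] by simp
        qed
        then show "(\<Sum>b\<in>C. (if a = b then of_nat (card C) else if b \<in> cls a then of_nat (card (cls a)) else 0) * x b) = 0"
          using row a by simp
      qed
    qed
  qed
  show ?thesis using adj red nd unfolding C_def by blast
qed


(* ---- part T10 ---- *)
lemma quotient_props:
  fixes G :: "('g, 'b) monoid_scheme" (structure)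
  assumes grp: "group G" and fin: "finite (carrier G)"
    and HA: "\<And>a b c. a \<in> involutions G \<Longrightarrow> b \<in> involutions G \<Longrightarrow> c \<in> involutions G \<Longrightarrow>
              a \<otimes>\<^bsub>G\<^esub> b \<noteq> b \<otimes>\<^bsub>G\<^esub> a \<Longrightarrow> c \<otimes>\<^bsub>G\<^esub> (a \<otimes>\<^bsub>G\<^esub> b) \<noteq> (a \<otimes>\<^bsub>G\<^esub> b) \<otimes>\<^bsub>G\<^esub> c"
    and HC: "\<exists>a\<in>involutions G. \<exists>b\<in>involutions G. a \<otimes>\<^bsub>G\<^esub> b \<noteq> b \<otimes>\<^bsub>G\<^esub> a"
  defines "Q \<equiv> G Mod grp_center G"
  shows "group Q"
    and "\<And>a b c. a \<in> involutions Q \<Longrightarrow> b \<in> involutions Q \<Longrightarrow> c \<in> involutions Q \<Longrightarrow>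
              a \<otimes>\<^bsub>Q\<^esub> b \<noteq> b \<otimes>\<^bsub>Q\<^esub> a \<Longrightarrow> c \<otimes>\<^bsub>Q\<^esub> (a \<otimes>\<^bsub>Q\<^esub> b) \<noteq> (a \<otimes>\<^bsub>Q\<^esub> b) \<otimes>\<^bsub>Q\<^esub> c"
    and "\<exists>a\<in>involutions Q. \<exists>b\<in>involutions Q. a \<otimes>\<^bsub>Q\<^esub> b \<noteq> b \<otimes>\<^bsub>Q\<^esub> a"
proof -
  interpret group G by (rule grp)
  define Z where "Z = grp_center G"
  have Zc: "z \<in> carrier G" "g \<in> carrier G \<Longrightarrow> z \<otimes> g = g \<otimes> z" if "z \<in> Z" for z g
    using that by (auto simp: Z_def grp_center_def)
  have Zsub: "subgroup Z G"
  proof (rule subgroupI)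
    show "Z \<subseteq> carrier G" using Zc by blast
    show "Z \<noteq> {}" using one_closed by (auto simp: Z_def grp_center_def)
  next
    fix z assume z: "z \<in> Z"
    have "inv z \<otimes> g = g \<otimes> inv z" if g: "g \<in> carrier G" for g
    proof -
      have zc: "z \<in> carrier G" using Zc(1)[OF z(1)] .
      have "inv z \<otimes> g = inv z \<otimes> (g \<otimes> z) \<otimes> inv z" using zc g by (simp add: m_assoc)
      also have "\<dots> = inv z \<otimes> (z \<otimes> g) \<otimes> inv z" using Zc(2)[OF z g] by simp
      also have "\<dots> = g \<otimes> inv z" using zc g by (simp add: m_assoc[symmetric])
      finally show ?thesis .
    qed
    moreover have "inv z \<in> carrier G" using Zc(1)[OF z] by simp
    ultimately show "inv z \<in> Z" unfolding Z_def grp_center_def by blast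
  next
    fix a b assume a: "a \<in> Z" and b: "b \<in> Z"
    have "(a \<otimes> b) \<otimes> g = g \<otimes> (a \<otimes> b)" if g: "g \<in> carrier G" for g
    proof -
      have ac: "a \<in> carrier G" "b \<in> carrier G" using Zc(1)[OF a] Zc(1)[OF b] by auto
      have "(a \<otimes> b) \<otimes> g = a \<otimes> (b \<otimes> g)" using ac g by (simp add: m_assoc)
      also have "\<dots> = a \<otimes> (g \<otimes> b)" using Zc(2)[OF b g] by simp
      also have "\<dots> = (a \<otimes> g) \<otimes> b" using ac g by (simp add: m_assoc)
      also have "\<dots> = (g \<otimes> a) \<otimes> b" using Zc(2)[OF a g] by simp
      also have "\<dots> = g \<otimes> (a \<otimes> b)" using ac g by (simp add: m_assoc)
      finally show ?thesis .
    qed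
    moreover have "a \<otimes> b \<in> carrier G" using Zc(1)[OF a] Zc(1)[OF b] by simp
    ultimately show "a \<otimes> b \<in> Z" unfolding Z_def grp_center_def by blast
  qed
  have Znorm: "Z \<lhd> G"
    unfolding normal_inv_iff
  proof (intro conjI ballI)
    show "subgroup Z G" by (rule Zsub)
    fix x h assume x: "x \<in> carrier G" and h: "h \<in> Z"
    have hc: "h \<in> carrier G" using Zc(1)[OF h] .
    have "x \<otimes> h \<otimes> inv x = h \<otimes> x \<otimes> inv x" using Zc(2)[OF h x] by simp
    also have "\<dots> = h" using hc x by (simp add: m_assoc)
    finally have "x \<otimes> h \<otimes> inv x = h" .
    then show "x \<otimes> h \<otimes> inv x \<in> Z" using h by simp
  qed
  interpret N: normal Z G by (rule Znorm)
  show gQ: "group Q" unfolding Q_def Z_def[symmetric] by (rule N.factorgroup_is_group)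
  have Qc: "carrier Q = rcosets Z" and Qm: "X \<otimes>\<^bsub>Q\<^esub> Y = X <#> Y" and Q1: "\<one>\<^bsub>Q\<^esub> = Z" for X Y
    unfolding Q_def Z_def by (simp_all add: FactGroup_def)
  have sum: "(Z #> a) \<otimes>\<^bsub>Q\<^esub> (Z #> b) = Z #> (a \<otimes> b)" if "a \<in> carrier G" "b \<in> carrier G" for a b
    unfolding Qm using N.rcos_sum that by blast
  have cos_in: "Z #> a \<in> carrier Q" if "a \<in> carrier G" for a
    unfolding Qc using that by (rule rcosetsI[OF Zsub[THEN subgroup.subset]])
  have cos_eq: "\<exists>z\<in>Z. a = z \<otimes> b" if "a \<in> carrier G" "b \<in> carrier G" "Z #> a = Z #> b" for a b
  proof -
    have "a \<in> Z #> b" using rcos_self[OF that(1) Zsub] that(3) by simp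
    then show ?thesis unfolding r_coset_def by blast
  qed
  have cos_z: "Z #> (z \<otimes> b) = Z #> b" if "z \<in> Z" "b \<in> carrier G" for z b
  proof -
    have "z \<otimes> b \<in> Z #> b" using that unfolding r_coset_def by blast
    then show ?thesis using repr_independence[OF _ that(2) Zsub] by simp
  qed
  have cos_one: "Z #> a = Z \<longleftrightarrow> a \<in> Z" if "a \<in> carrier G" for a
  proof
    assume "Z #> a = Z"
    then show "a \<in> Z" using rcos_self[OF that Zsub] by simp
  next
    assume "a \<in> Z"
    then show "Z #> a = Z" using cos_z[of a \<one>] Zc(1)[OF \<open>a \<in> Z\<close>] by (simp add: Zsub[THEN subgroup.subset])
  qed
  obtain u v where uv: "u \<in> involutions G" "v \<in> involutions G" "u \<otimes> v \<noteq> v \<otimes> u" using HC by blast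
  have uvc: "u \<in> carrier G" "v \<in> carrier G" "u \<otimes> u = \<one>" "v \<otimes> v = \<one>" using uv by (auto simp: involutions_def)
  have noinv: "z = \<one>" if z: "z \<in> Z" "z \<otimes> z = \<one>" for z
  proof (rule ccontr)
    assume "z \<noteq> \<one>"
    then have "z \<in> involutions G" using z Zc(1)[OF z(1)] by (simp add: involutions_def)
    then have "z \<otimes> (u \<otimes> v) \<noteq> (u \<otimes> v) \<otimes> z" using HA[OF uv(1,2)] uv(3) by blast
    moreover have "z \<otimes> (u \<otimes> v) = (u \<otimes> v) \<otimes> z" using Zc(2)[OF z(1)] uvc by simp
    ultimately show False by simp
  qed
  have zz: "z \<otimes> z = \<one>" if "z \<in> Z" "g \<in> carrier G" "(z \<otimes> z) \<otimes> g = g" for z g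
    using that Zc(1)[OF that(1)] by simp
  have sq_surj: "\<exists>w\<in>Z. w \<otimes> w = x" if x: "x \<in> Z" for x
  proof -
    have finZ: "finite Z" using fin Zsub[THEN subgroup.subset] finite_subset by blast
    have inj: "inj_on (\<lambda>w. w \<otimes> w) Z"
    proof (rule inj_onI)
      fix w y assume w: "w \<in> Z" and y: "y \<in> Z" and e: "w \<otimes> w = y \<otimes> y"
      define t where "t = w \<otimes> inv y"
      have tZ: "t \<in> Z" using w y Zsub unfolding t_def by (simp add: subgroup.m_closed subgroup.m_inv_closed)
      have wc: "w \<in> carrier G" "y \<in> carrier G" using Zc(1)[OF w] Zc(1)[OF y] by auto
      have iyZ: "inv y \<in> Z" using y Zsub by (simp add: subgroup.m_inv_closed)
      have iyw: "inv y \<otimes> w = w \<otimes> inv y" using Zc(2)[OF iyZ wc(1)] .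
      have "t \<otimes> t = w \<otimes> ((inv y \<otimes> w) \<otimes> inv y)"
        unfolding t_def using wc by (simp add: m_assoc)
      also have "\<dots> = w \<otimes> ((w \<otimes> inv y) \<otimes> inv y)" unfolding iyw ..
      also have "\<dots> = (w \<otimes> w) \<otimes> (inv y \<otimes> inv y)" using wc by (simp add: m_assoc)
      also have "\<dots> = (y \<otimes> y) \<otimes> (inv y \<otimes> inv y)" unfolding e ..
      also have "\<dots> = (y \<otimes> y) \<otimes> inv (y \<otimes> y)" using wc by (simp add: inv_mult_group)
      also have "\<dots> = \<one>" using wc by simp
      finally have "t = \<one>" using noinv tZ by blast
      then have "w \<otimes> inv y = \<one>" unfolding t_def .
      then show "w = y" using wc inv_solve_right'[of "\<one>" w y] by simp
    qed
    have sub: "(\<lambda>w. w \<otimes> w) ` Z \<subseteq> Z" using Zsub by (auto simp: subgroup.m_closed)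
    have "(\<lambda>w. w \<otimes> w) ` Z = Z" by (rule endo_inj_surj[OF finZ sub inj])
    then have "x \<in> (\<lambda>w. w \<otimes> w) ` Z" using x by simp
    then obtain w where "w \<in> Z" "x = w \<otimes> w" by (rule imageE)
    then show ?thesis by blast
  qed
  have lift: "\<exists>a\<in>involutions G. X = Z #> a" if X: "X \<in> involutions Q" for X
  proof -
    have XQ: "X \<in> carrier Q" "X \<noteq> Z" "X \<otimes>\<^bsub>Q\<^esub> X = Z" using X Q1 by (auto simp: involutions_def)
    obtain g where g: "g \<in> carrier G" "X = Z #> g" using XQ(1) unfolding Qc RCOSETS_def by blast
    have "Z #> (g \<otimes> g) = Z" using XQ(3) sum g by simp
    then have ggZ: "g \<otimes> g \<in> Z" using cos_one g by simp
    have gnZ: "g \<notin> Z" using XQ(2) cos_one g by auto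
    obtain w where w: "w \<in> Z" "w \<otimes> w = g \<otimes> g" using sq_surj[OF ggZ] by blast
    have wc: "w \<in> carrier G" "inv w \<in> Z" using Zc(1)[OF w(1)] w(1) Zsub by (auto simp: subgroup.m_inv_closed)
    define a where "a = inv w \<otimes> g"
    have ac: "a \<in> carrier G" unfolding a_def using wc g by simp
    have gw: "g \<otimes> inv w = inv w \<otimes> g" using Zc(2)[OF wc(2) g(1)] by simp
    have iwc: "inv w \<in> carrier G" using wc by simp
    have "a \<otimes> a = inv w \<otimes> ((g \<otimes> inv w) \<otimes> g)" unfolding a_def using iwc g by (simp add: m_assoc)
    also have "\<dots> = inv w \<otimes> ((inv w \<otimes> g) \<otimes> g)" unfolding gw ..
    also have "\<dots> = (inv w \<otimes> inv w) \<otimes> (g \<otimes> g)" using iwc g by (simp add: m_assoc)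
    also have "\<dots> = (inv w \<otimes> inv w) \<otimes> (w \<otimes> w)" unfolding w(2) ..
    also have "\<dots> = inv (w \<otimes> w) \<otimes> (w \<otimes> w)" using wc by (simp add: inv_mult_group)
    also have "\<dots> = \<one>" using wc by simp
    finally have aa: "a \<otimes> a = \<one>" .
    have an1: "a \<noteq> \<one>"
    proof
      assume "a = \<one>"
      then have "g = w \<otimes> \<one>" unfolding a_def using wc g inv_solve_left'[of "\<one>" w g] by simp
      then have "g = w" using wc by simp
      then show False using gnZ w by simp
    qed
    have "Z #> a = Z #> g" unfolding a_def by (rule cos_z[OF wc(2) g(1)])
    then show ?thesis using ac aa an1 g by (intro bexI[of _ a]) (auto simp: involutions_def)
  qed
  show "\<And>X Y W. X \<in> involutions Q \<Longrightarrow> Y \<in> involutions Q \<Longrightarrow> W \<in> involutions Q \<Longrightarrow>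
              X \<otimes>\<^bsub>Q\<^esub> Y \<noteq> Y \<otimes>\<^bsub>Q\<^esub> X \<Longrightarrow> W \<otimes>\<^bsub>Q\<^esub> (X \<otimes>\<^bsub>Q\<^esub> Y) \<noteq> (X \<otimes>\<^bsub>Q\<^esub> Y) \<otimes>\<^bsub>Q\<^esub> W"
  proof
    fix X Y W assume X: "X \<in> involutions Q" and Y: "Y \<in> involutions Q" and W: "W \<in> involutions Q"
      and nXY: "X \<otimes>\<^bsub>Q\<^esub> Y \<noteq> Y \<otimes>\<^bsub>Q\<^esub> X" and eW: "W \<otimes>\<^bsub>Q\<^esub> (X \<otimes>\<^bsub>Q\<^esub> Y) = (X \<otimes>\<^bsub>Q\<^esub> Y) \<otimes>\<^bsub>Q\<^esub> W"
    obtain a where a: "a \<in> involutions G" "X = Z #> a" using lift[OF X] by blast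
    obtain b where b: "b \<in> involutions G" "Y = Z #> b" using lift[OF Y] by blast
    obtain c where c: "c \<in> involutions G" "W = Z #> c" using lift[OF W] by blast
    have abc: "a \<in> carrier G" "b \<in> carrier G" "c \<in> carrier G" "c \<otimes> c = \<one>"
      using a b c by (auto simp: involutions_def)
    have nab: "a \<otimes> b \<noteq> b \<otimes> a" using nXY a b abc sum by auto
    define g where "g = a \<otimes> b"
    have gc: "g \<in> carrier G" unfolding g_def using abc by simp
    have "Z #> (c \<otimes> g) = Z #> (g \<otimes> c)" using eW a b c abc sum unfolding g_def by (simp add: m_assoc)
    then obtain z where z: "z \<in> Z" "c \<otimes> g = z \<otimes> (g \<otimes> c)"
      using cos_eq[OF m_closed[OF abc(3) gc] m_closed[OF gc abc(3)]] by blast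
    have zc: "z \<in> carrier G" using Zc(1)[OF z(1)] .
    have cz: "c \<otimes> z = z \<otimes> c" using Zc(2)[OF z(1) abc(3)] by simp
    have "g = c \<otimes> (c \<otimes> g)" using abc gc by (simp add: m_assoc[symmetric])
    also have "\<dots> = c \<otimes> (z \<otimes> (g \<otimes> c))" using z by simp
    also have "\<dots> = (c \<otimes> z) \<otimes> (g \<otimes> c)" using abc gc zc by (simp add: m_assoc)
    also have "\<dots> = (z \<otimes> c) \<otimes> (g \<otimes> c)" unfolding cz ..
    also have "\<dots> = z \<otimes> ((c \<otimes> g) \<otimes> c)" using abc gc zc by (simp add: m_assoc)
    also have "\<dots> = z \<otimes> ((z \<otimes> (g \<otimes> c)) \<otimes> c)" using z by simp
    also have "\<dots> = (z \<otimes> z) \<otimes> g" using abc gc zc by (simp add: m_assoc)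
    finally have "(z \<otimes> z) \<otimes> g = g" by simp
    then have "z = \<one>" using zz[OF z(1) gc] noinv z(1) by blast
    then have "c \<otimes> g = g \<otimes> c" using z gc abc by simp
    then show False using HA[OF a(1) b(1) c(1) nab] unfolding g_def by simp
  qed
  show "\<exists>X\<in>involutions Q. \<exists>Y\<in>involutions Q. X \<otimes>\<^bsub>Q\<^esub> Y \<noteq> Y \<otimes>\<^bsub>Q\<^esub> X"
  proof -
    have unZ: "u \<notin> Z" using Zc(2)[of u v] uvc uv(3) by blast
    have vnZ: "v \<notin> Z" using Zc(2)[of v u] uvc uv(3) by metis
    have i1: "Z #> u \<in> involutions Q"
      using cos_in[OF uvc(1)] sum[OF uvc(1) uvc(1)] uvc cos_one unZ Q1 Zsub
      by (auto simp: involutions_def Zsub[THEN subgroup.subset])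
    have i2: "Z #> v \<in> involutions Q"
      using cos_in[OF uvc(2)] sum[OF uvc(2) uvc(2)] uvc cos_one vnZ Q1 Zsub
      by (auto simp: involutions_def Zsub[THEN subgroup.subset])
    have i3: "(Z #> u) \<otimes>\<^bsub>Q\<^esub> (Z #> v) \<noteq> (Z #> v) \<otimes>\<^bsub>Q\<^esub> (Z #> u)"
    proof
      assume "(Z #> u) \<otimes>\<^bsub>Q\<^esub> (Z #> v) = (Z #> v) \<otimes>\<^bsub>Q\<^esub> (Z #> u)"
      then have "Z #> (u \<otimes> v) = Z #> (v \<otimes> u)" using sum uvc by simp
      then obtain z where z: "z \<in> Z" "u \<otimes> v = z \<otimes> (v \<otimes> u)"
        using cos_eq[OF m_closed[OF uvc(1,2)] m_closed[OF uvc(2,1)]] by blast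
      have zc: "z \<in> carrier G" using Zc(1)[OF z(1)] .
      have uz: "u \<otimes> z = z \<otimes> u" using Zc(2)[OF z(1) uvc(1)] by simp
      have "v \<otimes> u = u \<otimes> (u \<otimes> v) \<otimes> u" using uvc by (simp add: m_assoc[symmetric])
      also have "\<dots> = u \<otimes> (z \<otimes> (v \<otimes> u)) \<otimes> u" using z by simp
      also have "\<dots> = (u \<otimes> z) \<otimes> v" using uvc zc by (simp add: m_assoc)
      also have "\<dots> = (z \<otimes> u) \<otimes> v" unfolding uz ..
      also have "\<dots> = z \<otimes> (u \<otimes> v)" using uvc zc by (simp add: m_assoc)
      also have "\<dots> = z \<otimes> (z \<otimes> (v \<otimes> u))" using z by simp
      also have "\<dots> = (z \<otimes> z) \<otimes> (v \<otimes> u)" using zc uvc by (simp add: m_assoc)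
      finally have "(z \<otimes> z) \<otimes> (v \<otimes> u) = v \<otimes> u" by simp
      then have "z = \<one>" using zz[OF z(1)] noinv z(1) uvc by blast
      then show False using z uvc uv(3) by simp
    qed
    show ?thesis using i1 i2 i3 by blast
  qed
qed


(* ---- part T11 ---- *)
theorem proposition4p4:
  fixes q :: nat
    and k_type :: "'k::{field,finite} itself"
  assumes "CARD('k) = q ^ 2" and "even q" and "q \<noteq> 2"
  shows "(\<forall>a b. killing_adj (SU3 q :: ('k^3^3) monoid) (involutions (SU3 q)) a b
                 \<longleftrightarrow> commuting_adj (SU3 q :: ('k^3^3) monoid) (involutions (SU3 q)) a b)
       \<and> killing_reducible (SU3 q :: ('k^3^3) monoid) (involutions (SU3 q))
       \<and> killing_nondegenerate (SU3 q :: ('k^3^3) monoid) (involutions (SU3 q))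
       \<and> (\<forall>a b. killing_adj (PSU3 q :: ('k^3^3) set monoid) (involutions (PSU3 q)) a b
                 \<longleftrightarrow> commuting_adj (PSU3 q :: ('k^3^3) set monoid) (involutions (PSU3 q)) a b)
       \<and> killing_reducible (PSU3 q :: ('k^3^3) set monoid) (involutions (PSU3 q))
       \<and> killing_nondegenerate (PSU3 q :: ('k^3^3) set monoid) (involutions (PSU3 q))"
proof -
  note cq = assms(1) and eq = assms(2)
  have grp: "group (SU3 q :: ('k^3^3) monoid)" by (rule SU3_group[OF cq eq])
  have fin: "finite (carrier (SU3 q :: ('k^3^3) monoid))" by simp
  note HA = SU3_A[OF cq eq]
  note HC = SU3_Cex[OF cq eq]
  have part1: "(\<forall>a b. killing_adj (SU3 q :: ('k^3^3) monoid) (involutions (SU3 q)) a b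
                 \<longleftrightarrow> commuting_adj (SU3 q :: ('k^3^3) monoid) (involutions (SU3 q)) a b)
       \<and> killing_reducible (SU3 q :: ('k^3^3) monoid) (involutions (SU3 q))
       \<and> killing_nondegenerate (SU3 q :: ('k^3^3) monoid) (involutions (SU3 q))"
    by (rule abstract_killing[OF grp HA HC])
  have Qg: "group (PSU3 q :: ('k^3^3) set monoid)"
    unfolding PSU3_def by (rule quotient_props(1)[OF grp fin HA HC])
  have QA: "\<And>a b c. a \<in> involutions (PSU3 q :: ('k^3^3) set monoid) \<Longrightarrow> b \<in> involutions (PSU3 q :: ('k^3^3) set monoid)
      \<Longrightarrow> c \<in> involutions (PSU3 q :: ('k^3^3) set monoid) \<Longrightarrow>
      a \<otimes>\<^bsub>PSU3 q\<^esub> b \<noteq> b \<otimes>\<^bsub>PSU3 q\<^esub> a \<Longrightarrow>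
      c \<otimes>\<^bsub>PSU3 q\<^esub> (a \<otimes>\<^bsub>PSU3 q\<^esub> b) \<noteq> (a \<otimes>\<^bsub>PSU3 q\<^esub> b) \<otimes>\<^bsub>PSU3 q\<^esub> c"
    unfolding PSU3_def by (rule quotient_props(2)[OF grp fin HA HC])
  have QC: "\<exists>a\<in>involutions (PSU3 q :: ('k^3^3) set monoid). \<exists>b\<in>involutions (PSU3 q :: ('k^3^3) set monoid).
      a \<otimes>\<^bsub>PSU3 q\<^esub> b \<noteq> b \<otimes>\<^bsub>PSU3 q\<^esub> a"
    unfolding PSU3_def by (rule quotient_props(3)[OF grp fin HA HC])
  have part2: "(\<forall>a b. killing_adj (PSU3 q :: ('k^3^3) set monoid) (involutions (PSU3 q)) a b
                 \<longleftrightarrow> commuting_adj (PSU3 q :: ('k^3^3) set monoid) (involutions (PSU3 q)) a b)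
       \<and> killing_reducible (PSU3 q :: ('k^3^3) set monoid) (involutions (PSU3 q))
       \<and> killing_nondegenerate (PSU3 q :: ('k^3^3) set monoid) (involutions (PSU3 q))"
    by (rule abstract_killing[OF Qg QA QC])
  show ?thesis using part1 part2 by blast
qed

end
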